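(* Define $\varepsilon:\mathbb{N}\to(0,\infty)$ by $\varepsilon(n)=n^{-2}$ if $n=2^k$ for some $k\in\mathbb{N}$, and $\varepsilon(n)=n^{-3}$ otherwise. Then $\sum_{n\geq1}n\,\varepsilon(n)<+\infty$ and $\mathcal{U}(\varepsilon)=(0,1)\setminus\mathbb{Q}$.
   Context: For $\alpha\in(0,1)\setminus\mathbb{Q}$, let $\Delta^2$ be the closed unit bidisk, $\mathcal{P}_n$ the polynomials in $\mathbb{C}[z,w]$ of total degree at most $n$, $K=\{(e^z,e^{\alpha z}):|z|\leq1\}$, $E_n(\alpha)=\sup\{\sup_{\Delta^2}|P|:\ P\in\mathcal{P}_n,\ \sup_K|P|\leq1\}$, $e_n(\alpha)=\log E_n(\alpha)$, and $\mathcal{U}(\varepsilon)=\{\alpha\in(0,1)\setminus\mathbb{Q}:\ \limsup_{n\to\infty}\varepsilon(n)e_n(\alpha)=+\infty\}$. *)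

theory Defs
  imports "HOL-Analysis.Analysis" "HOL-Library.Liminf_Limsup"
begin

definition evalP :: "nat \<Rightarrow> (nat \<Rightarrow> nat \<Rightarrow> complex) \<Rightarrow> complex \<Rightarrow> complex \<Rightarrow> complex" where
  "evalP n c z w = (\<Sum>(i,j)\<in>{(i,j). i + j \<le> n}. c i j * z ^ i * w ^ j)"

definition bidisk :: "(complex \<times> complex) set" where
  "bidisk = cball 0 1 \<times> cball 0 1"

definition Kset :: "real \<Rightarrow> (complex \<times> complex) set" where
  "Kset \<alpha> = (\<lambda>z. (exp z, exp (complex_of_real \<alpha> * z))) ` cball 0 1"

definition supBidisk :: "nat \<Rightarrow> (nat \<Rightarrow> nat \<Rightarrow> complex) \<Rightarrow> real" where
  "supBidisk n c = (SUP p\<in>bidisk. norm (evalP n c (fst p) (snd p)))"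

definition supK :: "real \<Rightarrow> nat \<Rightarrow> (nat \<Rightarrow> nat \<Rightarrow> complex) \<Rightarrow> real" where
  "supK \<alpha> n c = (SUP p\<in>Kset \<alpha>. norm (evalP n c (fst p) (snd p)))"

definition E_n :: "nat \<Rightarrow> real \<Rightarrow> real" where
  "E_n n \<alpha> = Sup {supBidisk n c | c. supK \<alpha> n c \<le> 1}"

definition e_n :: "nat \<Rightarrow> real \<Rightarrow> real" where
  "e_n n \<alpha> = ln (E_n n \<alpha>)"

definition U_set :: "(nat \<Rightarrow> real) \<Rightarrow> real set" where
  "U_set \<epsilon> = {\<alpha>. \<alpha> \<in> {0<..<1} - \<rat> \<and>
      limsup (\<lambda>n. ereal (\<epsilon> n * e_n n \<alpha>)) = \<infinity>}"

definition eps_ex :: "nat \<Rightarrow> real" where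
  "eps_ex n = (if \<exists>k. n = 2 ^ k then 1 / real n ^ 2 else 1 / real n ^ 3)"

end

theory Submission
  imports Defs "HOL-Computational_Algebra.Polynomial" "HOL-Real_Asymp.Real_Asymp"
begin


definition lam :: "real \<Rightarrow> nat \<times> nat \<Rightarrow> real" where
  "lam \<alpha> k = real (fst k) + \<alpha> * real (snd k)"

lemma finite_II: "finite {(i,j). i + j \<le> (n::nat)}"
proof -
  have "{(i,j). i + j \<le> n} \<subseteq> {..n} \<times> {..n}" by auto
  thus ?thesis by (rule finite_subset) auto
qed

lemma inj_lam:
  assumes "\<alpha> \<notin> \<rat>" shows "inj (lam \<alpha>)"
proof (rule injI)
  fix x y assume h: "lam \<alpha> x = lam \<alpha> y"
  obtain i j i' j' where x: "x = (i,j)" and y: "y = (i',j')" by (cases x, cases y) auto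
  have e: "real i + \<alpha> * real j = real i' + \<alpha> * real j'" using h x y by (simp add: lam_def)
  have "j = j'"
  proof (rule ccontr)
    assume "j \<noteq> j'"
    then have nz: "real j - real j' \<noteq> 0" by simp
    from e have "\<alpha> * (real j - real j') = real i' - real i" by (simp add: algebra_simps)
    then have "\<alpha> = (real i' - real i) / (real j - real j')" using nz by (simp add: field_simps)
    moreover have "(real i' - real i) / (real j - real j') \<in> \<rat>" by (intro Rats_divide Rats_diff) auto
    ultimately show False using assms by simp
  qed
  with e have "i = i'" by simp
  with \<open>j = j'\<close> x y show "x = y" by simp
qed

lemma evalP_exp:
  "evalP n c (exp z) (exp (complex_of_real \<alpha> * z)) =
     (\<Sum>k\<in>{(i,j). i + j \<le> n}. c (fst k) (snd k) * exp (complex_of_real (lam \<alpha> k) * z))"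
  unfolding evalP_def
proof (rule sum.cong[OF refl])
  fix k assume "k \<in> {(i,j). i + j \<le> n}"
  obtain i j where k: "k = (i,j)" by (cases k)
  have "exp z ^ i * exp (complex_of_real \<alpha> * z) ^ j = exp (complex_of_real (lam \<alpha> k) * z)"
    by (simp add: k lam_def exp_of_nat_mult[symmetric] exp_add[symmetric] algebra_simps)
  then show "(case k of (i, j) \<Rightarrow> c i j * exp z ^ i * exp (complex_of_real \<alpha> * z) ^ j) =
     c (fst k) (snd k) * exp (complex_of_real (lam \<alpha> k) * z)" by (simp add: k mult.assoc)
qed

lemma evalP_bound:
  assumes "norm z \<le> A" "norm w \<le> B"
  shows "norm (evalP n c z w) \<le> (\<Sum>k\<in>{(i,j). i + j \<le> n}. norm (c (fst k) (snd k)) * A ^ fst k * B ^ snd k)"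
  unfolding evalP_def
proof (rule order_trans[OF norm_sum], rule sum_mono)
  fix k assume "k \<in> {(i,j). i + j \<le> n}"
  obtain i j where k: "k = (i,j)" by (cases k)
  have "norm (c i j * z ^ i * w ^ j) = norm (c i j) * norm z ^ i * norm w ^ j"
    by (simp add: norm_mult norm_power)
  also have "\<dots> \<le> norm (c i j) * A ^ i * B ^ j"
    using assms order_trans[OF norm_ge_zero[of z] assms(1)] order_trans[OF norm_ge_zero[of w] assms(2)]
    by (intro mult_mono power_mono mult_left_mono zero_le_power mult_nonneg_nonneg) (auto intro: order_trans)
  finally show "norm (case k of (i, j) \<Rightarrow> c i j * z ^ i * w ^ j) \<le> norm (c (fst k) (snd k)) * A ^ fst k * B ^ snd k"
    by (simp add: k)
qed




lemma coeff_recover: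
  fixes \<Lambda> :: "'a \<Rightarrow> real" and T :: "'a set"
  assumes fin: "finite T" and inj: "inj_on \<Lambda> T" and kT: "k \<in> T"
  shows "\<exists>C\<ge>0. \<forall>(c::'a \<Rightarrow> complex) B. (\<forall>t\<in>{0..1}. norm (\<Sum>j\<in>T. c j * exp (complex_of_real (\<Lambda> j * t))) \<le> B)
            \<longrightarrow> norm (c k) \<le> C * B"
proof -
  define h :: real where "h = 1 / (real (degree (\<Prod>l\<in>T-{k}. [:- exp (\<Lambda> l * (1::real)), 1:])) + 1)"
  define x where "x j = exp (\<Lambda> j * h)" for j
  define p where "p = (\<Prod>l\<in>T-{k}. [:- x l, 1:])"
  have degp: "degree p = degree (\<Prod>l\<in>T-{k}. [:- exp (\<Lambda> l * (1::real)), 1:])"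
  proof -
    have "degree p = card (T - {k})" unfolding p_def
      by (subst degree_prod_eq_sum_degree) (auto simp: fin)
    moreover have "degree (\<Prod>l\<in>T-{k}. [:- exp (\<Lambda> l * (1::real)), 1:]) = card (T - {k})"
      by (subst degree_prod_eq_sum_degree) (auto simp: fin)
    ultimately show ?thesis by simp
  qed
  have hpos: "h > 0" unfolding h_def by simp
  have xinj: "inj_on x T"
    using inj hpos unfolding x_def inj_on_def by auto
  have polyx: "poly p (x j) = (\<Prod>l\<in>T-{k}. (x j - x l))" for j
    unfolding p_def by (simp add: poly_prod)
  have pz: "poly p (x j) = 0" if "j \<in> T" "j \<noteq> k" for j
    unfolding polyx using that fin by (intro prod_zero) auto
  have pk: "poly p (x k) \<noteq> 0"
    unfolding polyx using fin xinj kT by (auto simp: prod_zero_iff inj_on_def)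
  define C where "C = (\<Sum>q\<le>degree p. \<bar>coeff p q\<bar>) / \<bar>poly p (x k)\<bar>"
  have C0: "C \<ge> 0" unfolding C_def by simp
  have main: "norm (c k) \<le> C * B"
    if hB: "\<forall>t\<in>{0..1}. norm (\<Sum>j\<in>T. c j * exp (complex_of_real (\<Lambda> j * t))) \<le> B" for c B
  proof -
    define F where "F t = (\<Sum>j\<in>T. c j * exp (complex_of_real (\<Lambda> j * t)))" for t
    have ident: "(\<Sum>q\<le>degree p. complex_of_real (coeff p q) * F (real q * h)) = c k * complex_of_real (poly p (x k))"
    proof -
      have "(\<Sum>q\<le>degree p. complex_of_real (coeff p q) * F (real q * h))
          = (\<Sum>j\<in>T. c j * (\<Sum>q\<le>degree p. complex_of_real (coeff p q * x j ^ q)))"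
        unfolding F_def
        by (simp add: sum_distrib_left sum_distrib_right x_def exp_of_nat_mult[symmetric] algebra_simps
             exp_of_real[symmetric] sum.swap[of _ T])
      also have "\<dots> = (\<Sum>j\<in>T. c j * complex_of_real (poly p (x j)))"
        by (simp add: poly_altdef)
      also have "\<dots> = c k * complex_of_real (poly p (x k))"
        by (rule sum.remove[OF fin kT, THEN trans]) (simp add: pz)
      finally show ?thesis .
    qed
    have Fb: "norm (F (real q * h)) \<le> B" if "q \<le> degree p" for q
    proof -
      have "real q * h \<le> 1" using that hpos unfolding h_def degp[symmetric] by (simp add: field_simps)
      moreover have "real q * h \<ge> 0" using hpos by simp
      ultimately have "real q * h \<in> {0..1}" by simp
      from hB[rule_format, OF this] show ?thesis unfolding F_def .
    qed
    have "norm (c k) * \<bar>poly p (x k)\<bar> = norm (c k * complex_of_real (poly p (x k)))"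
      by (simp add: norm_mult)
    also have "\<dots> \<le> (\<Sum>q\<le>degree p. \<bar>coeff p q\<bar> * B)"
      unfolding ident[symmetric]
      by (rule order_trans[OF norm_sum], rule sum_mono) (auto simp: norm_mult intro!: mult_left_mono Fb)
    also have "\<dots> = (\<Sum>q\<le>degree p. \<bar>coeff p q\<bar>) * B" by (simp add: sum_distrib_right)
    finally have "norm (c k) * \<bar>poly p (x k)\<bar> \<le> (\<Sum>q\<le>degree p. \<bar>coeff p q\<bar>) * B" .
    then show ?thesis using pk unfolding C_def by (simp add: field_simps)
  qed
  show ?thesis using C0 main by blast
qed




lemma bidisk_ne: "(0,0) \<in> bidisk" by (simp add: bidisk_def)

lemma bdd_bidisk: "bdd_above ((\<lambda>p. norm (evalP n c (fst p) (snd p))) ` bidisk)"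
  and supBidisk_le: "supBidisk n c \<le> (\<Sum>k\<in>{(i,j). i + j \<le> n}. norm (c (fst k) (snd k)))"
proof -
  have b: "norm (evalP n c (fst p) (snd p)) \<le> (\<Sum>k\<in>{(i,j). i + j \<le> n}. norm (c (fst k) (snd k)))"
    if "p \<in> bidisk" for p
    using evalP_bound[of "fst p" 1 "snd p" 1 n c] that by (auto simp: bidisk_def)
  show "bdd_above ((\<lambda>p. norm (evalP n c (fst p) (snd p))) ` bidisk)"
    using b by (intro bdd_aboveI2) 
  show "supBidisk n c \<le> (\<Sum>k\<in>{(i,j). i + j \<le> n}. norm (c (fst k) (snd k)))"
    unfolding supBidisk_def using bidisk_ne b by (intro cSUP_least) auto
qed

lemma supBidisk_ge: "p \<in> bidisk \<Longrightarrow> norm (evalP n c (fst p) (snd p)) \<le> supBidisk n c"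
  unfolding supBidisk_def by (rule cSUP_upper[OF _ bdd_bidisk])

lemma Kset_mem: "(exp z, exp (complex_of_real \<alpha> * z)) \<in> Kset \<alpha>" if "norm z \<le> 1"
  using that unfolding Kset_def by auto

lemma bdd_K: "bdd_above ((\<lambda>p. norm (evalP n c (fst p) (snd p))) ` Kset \<alpha>)"
proof -
  have b: "norm (evalP n c (fst p) (snd p)) \<le> (\<Sum>k\<in>{(i,j). i + j \<le> n}. norm (c (fst k) (snd k)) * exp 1 ^ fst k * exp \<bar>\<alpha>\<bar> ^ snd k)"
    if pK: "p \<in> Kset \<alpha>" for p
  proof -
    obtain z where z0: "z \<in> cball 0 1" and zp: "p = (exp z, exp (complex_of_real \<alpha> * z))"
      using pK unfolding Kset_def by blast
    have z: "norm z \<le> 1" "p = (exp z, exp (complex_of_real \<alpha> * z))" using z0 zp by auto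
    have "Re z \<le> 1" using z(1) complex_Re_le_cmod[of z] by linarith
    then have n1: "norm (exp z) \<le> exp 1" by simp
    have "Re (complex_of_real \<alpha> * z) \<le> \<bar>\<alpha>\<bar>"
    proof -
      have "Re (complex_of_real \<alpha> * z) \<le> norm (complex_of_real \<alpha> * z)" by (rule complex_Re_le_cmod)
      also have "\<dots> = \<bar>\<alpha>\<bar> * norm z" by (simp add: norm_mult)
      also have "\<dots> \<le> \<bar>\<alpha>\<bar>" using z(1) by (simp add: mult_left_le)
      finally show ?thesis .
    qed
    then have n2: "norm (exp (complex_of_real \<alpha> * z)) \<le> exp \<bar>\<alpha>\<bar>" by simp
    show ?thesis using evalP_bound[OF n1 n2, of n c] z by simp
  qed
  then show ?thesis by (intro bdd_aboveI2)
qed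

lemma supK_ge: "p \<in> Kset \<alpha> \<Longrightarrow> norm (evalP n c (fst p) (snd p)) \<le> supK \<alpha> n c"
  unfolding supK_def by (rule cSUP_upper[OF _ bdd_K])

lemma supK_nonneg: "0 \<le> supK \<alpha> n c"
  using supK_ge[OF Kset_mem[of 0 \<alpha>], of n c] by (rule order_trans[OF norm_ge_zero]) simp

lemma E_bound:
  assumes "\<alpha> \<notin> \<rat>"
  shows "\<exists>C\<ge>0. \<forall>c. supBidisk n c \<le> C * supK \<alpha> n c"
proof -
  let ?I = "{(i,j). i + j \<le> n}"
  define P where "P k C \<longleftrightarrow> C \<ge> 0 \<and> (\<forall>(c::nat\<times>nat \<Rightarrow> complex) B. (\<forall>t\<in>{0..1}. norm (\<Sum>j\<in>?I. c j * exp (complex_of_real (lam \<alpha> j * t))) \<le> B)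
            \<longrightarrow> norm (c k) \<le> C * B)" for k C
  have "\<forall>k\<in>?I. \<exists>C. P k C"
    unfolding P_def using coeff_recover[OF finite_II inj_on_subset[OF inj_lam[OF assms] subset_UNIV]] by blast
  then obtain Cf where CfP: "\<forall>k\<in>?I. P k (Cf k)" by (rule bchoice[THEN exE])
  have Cf: "\<And>k. k \<in> ?I \<Longrightarrow> Cf k \<ge> 0"
    "\<And>k c B. k \<in> ?I \<Longrightarrow> (\<forall>t\<in>{0..1}. norm (\<Sum>j\<in>?I. c j * exp (complex_of_real (lam \<alpha> j * t))) \<le> B)
            \<Longrightarrow> norm (c k) \<le> Cf k * B"
    using CfP unfolding P_def by blast+
  have "supBidisk n c \<le> (\<Sum>k\<in>?I. Cf k) * supK \<alpha> n c" for c
  proof -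
    have hB: "\<forall>t\<in>{0..1}. norm (\<Sum>j\<in>?I. (\<lambda>k. c (fst k) (snd k)) j * exp (complex_of_real (lam \<alpha> j * t))) \<le> supK \<alpha> n c"
    proof
      fix t :: real assume "t \<in> {0..1}"
      then have "norm (complex_of_real t) \<le> 1" by auto
      from supK_ge[OF Kset_mem[OF this], of n c]
      show "norm (\<Sum>j\<in>?I. (\<lambda>k. c (fst k) (snd k)) j * exp (complex_of_real (lam \<alpha> j * t))) \<le> supK \<alpha> n c"
        by (simp add: evalP_exp)
    qed
    have "supBidisk n c \<le> (\<Sum>k\<in>?I. norm (c (fst k) (snd k)))" by (rule supBidisk_le)
    also have "\<dots> \<le> (\<Sum>k\<in>?I. Cf k * supK \<alpha> n c)"
      by (rule sum_mono) (use Cf(2)[OF _ hB] in auto)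
    also have "\<dots> = (\<Sum>k\<in>?I. Cf k) * supK \<alpha> n c" by (simp add: sum_distrib_right)
    finally show ?thesis .
  qed
  moreover have "(\<Sum>k\<in>?I. Cf k) \<ge> 0" using Cf(1) by (intro sum_nonneg) auto
  ultimately show ?thesis by blast
qed




definition DD :: "('a \<Rightarrow> real) \<Rightarrow> 'a set \<Rightarrow> nat \<Rightarrow> real" where
  "DD \<Lambda> T m = (\<Sum>k\<in>T. \<Lambda> k ^ m / (\<Prod>l\<in>T-{k}. (\<Lambda> k - \<Lambda> l)))"

lemma DD_rec:
  assumes fin: "finite T" and a: "a \<notin> T" and inj: "inj_on \<Lambda> (insert a T)"
  shows "DD \<Lambda> (insert a T) (Suc m) = \<Lambda> a * DD \<Lambda> (insert a T) m + DD \<Lambda> T m"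
proof -
  have "DD \<Lambda> (insert a T) (Suc m) - \<Lambda> a * DD \<Lambda> (insert a T) m
      = (\<Sum>k\<in>insert a T. \<Lambda> k ^ m * (\<Lambda> k - \<Lambda> a) / (\<Prod>l\<in>insert a T-{k}. (\<Lambda> k - \<Lambda> l)))"
    unfolding DD_def sum_distrib_left sum_subtractf[symmetric]
    by (rule sum.cong) (simp_all add: right_diff_distrib diff_divide_distrib mult.commute)
  also have "\<dots> = (\<Sum>k\<in>T. \<Lambda> k ^ m * (\<Lambda> k - \<Lambda> a) / (\<Prod>l\<in>insert a T-{k}. (\<Lambda> k - \<Lambda> l)))"
    using fin a by simp
  also have "\<dots> = (\<Sum>k\<in>T. \<Lambda> k ^ m / (\<Prod>l\<in>T-{k}. (\<Lambda> k - \<Lambda> l)))"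
  proof (rule sum.cong[OF refl])
    fix k assume k: "k \<in> T"
    have ka: "k \<noteq> a" using k a by auto
    have ne: "\<Lambda> k - \<Lambda> a \<noteq> 0" using inj k ka by (auto simp: inj_on_def)
    have "insert a T - {k} = insert a (T - {k})" using ka by auto
    then have "(\<Prod>l\<in>insert a T-{k}. (\<Lambda> k - \<Lambda> l)) = (\<Lambda> k - \<Lambda> a) * (\<Prod>l\<in>T-{k}. (\<Lambda> k - \<Lambda> l))"
      using fin a by simp
    then show "\<Lambda> k ^ m * (\<Lambda> k - \<Lambda> a) / (\<Prod>l\<in>insert a T-{k}. (\<Lambda> k - \<Lambda> l)) = \<Lambda> k ^ m / (\<Prod>l\<in>T-{k}. (\<Lambda> k - \<Lambda> l))"
      using ne by simp
  qed
  finally show ?thesis unfolding DD_def by simp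
qed

lemma DD_0:
  assumes "finite T" "inj_on \<Lambda> T"
  shows "DD \<Lambda> T 0 = (if card T = 1 then 1 else 0)"
  using assms
proof (induction "card T" arbitrary: T rule: less_induct)
  case less
  show ?case
  proof (cases "card T \<le> 1")
    case True
    then consider "card T = 0" | "card T = 1" by linarith
    then consider "T = {}" | a where "T = {a}" using less.prems(1)
      by cases (auto simp: card_1_singleton_iff)
    then show ?thesis by cases (auto simp: DD_def)
  next
    case False
    define k where "k = card T - 2"
    have "card T = Suc (Suc k)" using False unfolding k_def by arith
    then obtain a b S where T: "T = insert a (insert b S)" and ab: "a \<noteq> b" "a \<notin> S" "b \<notin> S"
      unfolding card_Suc_eq by auto
    have finS: "finite S" using less.prems(1) T by simp
    have injT: "inj_on \<Lambda> (insert a (insert b S))" using less.prems(2) T by simp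
    have e1: "DD \<Lambda> T (Suc 0) = \<Lambda> a * DD \<Lambda> T 0 + DD \<Lambda> (insert b S) 0"
      unfolding T using DD_rec[of "insert b S" a \<Lambda> 0] finS ab injT by simp
    have e2: "DD \<Lambda> T (Suc 0) = \<Lambda> b * DD \<Lambda> T 0 + DD \<Lambda> (insert a S) 0"
      unfolding T using DD_rec[of "insert a S" b \<Lambda> 0] finS ab injT by (simp add: insert_commute)
    have cT: "card T = Suc (Suc (card S))" using T finS ab by simp
    have i1: "DD \<Lambda> (insert b S) 0 = (if card (insert b S) = 1 then 1 else 0)"
      by (rule less.hyps) (use cT finS ab injT in \<open>auto intro: inj_on_subset\<close>)
    have i2: "DD \<Lambda> (insert a S) 0 = (if card (insert a S) = 1 then 1 else 0)"
      by (rule less.hyps) (use cT finS ab injT in \<open>auto intro: inj_on_subset\<close>)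
    have "card (insert b S) = card (insert a S)" using finS ab by simp
    then have "(\<Lambda> a - \<Lambda> b) * DD \<Lambda> T 0 = 0" using e1 e2 i1 i2 by (auto simp: algebra_simps)
    moreover have "\<Lambda> a \<noteq> \<Lambda> b" using injT ab by (auto simp: inj_on_def)
    ultimately show ?thesis using cT by simp
  qed
qed




lemma binom_arith:
  fixes N :: real
  shows "N * real (m choose Suc s) * N ^ (m - Suc s) + real (m choose s) * N ^ (m - s)
       = real (Suc m choose Suc s) * N ^ (Suc m - Suc s)"
proof (cases "m \<ge> Suc s")
  case True
  then have "N * N ^ (m - Suc s) = N ^ (m - s)"
    by (metis Suc_diff_Suc Suc_le_lessD power_Suc)
  then show ?thesis by (simp add: algebra_simps)
next
  case False
  then have "m choose Suc s = 0" by simp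
  moreover have "m - s = 0" using False by simp
  ultimately show ?thesis using False by simp
qed

lemma DD_bound:
  assumes "finite T" "T \<noteq> {}" "inj_on \<Lambda> T" "\<forall>k\<in>T. 0 \<le> \<Lambda> k \<and> \<Lambda> k \<le> N"
  shows "0 \<le> DD \<Lambda> T m \<and> DD \<Lambda> T m \<le> real (m choose (card T - 1)) * N ^ (m - (card T - 1))"
  using assms
proof (induction m arbitrary: T)
  case 0
  have N0: "0 \<le> N" using "0.prems"(2,4) by fastforce
  show ?case using DD_0[OF "0.prems"(1,3)] N0 by auto
next
  case (Suc m)
  obtain a where aT: "a \<in> T" using Suc.prems(2) by blast
  define S where "S = T - {a}"
  have T: "T = insert a S" and aS: "a \<notin> S" and finS: "finite S" using aT Suc.prems(1) unfolding S_def by auto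
  have N0: "0 \<le> N" and a0: "0 \<le> \<Lambda> a" "\<Lambda> a \<le> N" using Suc.prems(4) aT by fastforce+
  show ?case
  proof (cases "S = {}")
    case True
    then have "T = {a}" using T by simp
    then have "DD \<Lambda> T (Suc m) = \<Lambda> a ^ Suc m" by (simp add: DD_def)
    moreover have "\<Lambda> a ^ Suc m \<le> N ^ Suc m" using a0 by (intro power_mono) auto
    ultimately show ?thesis using a0 \<open>T = {a}\<close> by simp
  next
    case False
    define s where "s = card S"
    have s1: "s \<ge> 1" using False finS unfolding s_def by (simp add: Suc_leI card_gt_0_iff)
    then obtain s' where s': "s = Suc s'" by (cases s) auto
    have cT: "card T - 1 = Suc s'" using T aS finS s' unfolding s_def by simp
    have cS: "card S - 1 = s'" using s' unfolding s_def by simp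
    have IT: "0 \<le> DD \<Lambda> T m \<and> DD \<Lambda> T m \<le> real (m choose Suc s') * N ^ (m - Suc s')"
      using Suc.IH[OF Suc.prems] unfolding cT .
    have IS: "0 \<le> DD \<Lambda> S m \<and> DD \<Lambda> S m \<le> real (m choose s') * N ^ (m - s')"
      using Suc.IH[of S] finS False Suc.prems(3,4) cS T by (auto intro: inj_on_subset)
    have rec: "DD \<Lambda> T (Suc m) = \<Lambda> a * DD \<Lambda> T m + DD \<Lambda> S m"
      using DD_rec[OF finS aS, of \<Lambda> m] Suc.prems(3) T by simp
    have "\<Lambda> a * DD \<Lambda> T m \<le> N * (real (m choose Suc s') * N ^ (m - Suc s'))"
      using IT a0 by (intro mult_mono) auto
    then have "DD \<Lambda> T (Suc m) \<le> real (Suc m choose Suc s') * N ^ (Suc m - Suc s')"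
      using rec IS binom_arith[of N m s'] by (simp add: mult.assoc)
    moreover have "0 \<le> DD \<Lambda> T (Suc m)" using rec IT IS a0 by simp
    ultimately show ?thesis using cT by simp
  qed
qed




lemma exp_sum_series:
  fixes \<Lambda> :: "'a \<Rightarrow> real" and z :: complex
  assumes fin: "finite T"
  shows "(\<lambda>m. complex_of_real (DD \<Lambda> T m) * z ^ m / fact m) sums
           (\<Sum>k\<in>T. complex_of_real (1 / (\<Prod>l\<in>T-{k}. (\<Lambda> k - \<Lambda> l))) * exp (complex_of_real (\<Lambda> k) * z))"
proof -
  have "(\<lambda>m. \<Sum>k\<in>T. complex_of_real (1 / (\<Prod>l\<in>T-{k}. (\<Lambda> k - \<Lambda> l))) * ((complex_of_real (\<Lambda> k) * z) ^ m /\<^sub>R fact m))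
        sums (\<Sum>k\<in>T. complex_of_real (1 / (\<Prod>l\<in>T-{k}. (\<Lambda> k - \<Lambda> l))) * exp (complex_of_real (\<Lambda> k) * z))"
    by (intro sums_sum sums_mult exp_converges)
  moreover have "(\<Sum>k\<in>T. complex_of_real (1 / (\<Prod>l\<in>T-{k}. (\<Lambda> k - \<Lambda> l))) * ((complex_of_real (\<Lambda> k) * z) ^ m /\<^sub>R fact m))
      = complex_of_real (DD \<Lambda> T m) * z ^ m / fact m" for m
    unfolding DD_def of_real_sum sum_distrib_right sum_divide_distrib
    by (rule sum.cong) (auto simp: scaleR_conv_of_real power_mult_distrib field_simps)
  ultimately show ?thesis by simp
qed

lemma g_sums:
  fixes N :: real
  shows "(\<lambda>m. real (m choose s) * N ^ (m - s) / fact m) sums (exp N / fact s)"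
proof -
  have "(\<lambda>i. N ^ i / fact i / fact s) sums (exp N / fact s)"
    using exp_converges[of N] by (intro sums_divide) (simp add: divide_inverse mult.commute)
  moreover have "real ((i + s) choose s) * N ^ (i + s - s) / fact (i + s) = N ^ i / fact i / fact s" for i
  proof -
    have "fact s * fact i * ((i + s) choose s) = (fact (i + s) :: nat)"
      using binomial_fact_lemma[of s "i+s"] by simp
    then have "fact s * fact i * real ((i + s) choose s) = (fact (i + s) :: real)"
      by (metis of_nat_fact of_nat_mult)
    then show ?thesis by (simp add: field_simps)
  qed
  ultimately have "(\<lambda>i. real ((i + s) choose s) * N ^ (i + s - s) / fact (i + s)) sums (exp N / fact s)"
    by simp
  then show ?thesis by (subst sums_zero_iff_shift[symmetric, of s]) auto
qed

lemma exp_sum_bound: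
  fixes \<Lambda> :: "'a \<Rightarrow> real" and z :: complex
  assumes fin: "finite T" "T \<noteq> {}" "inj_on \<Lambda> T" "\<forall>k\<in>T. 0 \<le> \<Lambda> k \<and> \<Lambda> k \<le> N" and z: "norm z \<le> 1"
  shows "norm (\<Sum>k\<in>T. complex_of_real (1 / (\<Prod>l\<in>T-{k}. (\<Lambda> k - \<Lambda> l))) * exp (complex_of_real (\<Lambda> k) * z))
          \<le> exp N / fact (card T - 1)"
proof -
  let ?s = "card T - 1"
  have "norm (suminf (\<lambda>m. complex_of_real (DD \<Lambda> T m) * z ^ m / fact m))
      \<le> suminf (\<lambda>m. real (m choose ?s) * N ^ (m - ?s) / fact m)"
  proof (rule norm_suminf_le)
    fix m
    have b: "0 \<le> DD \<Lambda> T m \<and> DD \<Lambda> T m \<le> real (m choose ?s) * N ^ (m - ?s)"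
      by (rule DD_bound[OF fin])
    have "norm (complex_of_real (DD \<Lambda> T m) * z ^ m / fact m) = DD \<Lambda> T m * norm z ^ m / fact m"
      using b by (simp add: norm_mult norm_divide norm_power)
    also have "\<dots> \<le> DD \<Lambda> T m * 1 / fact m"
      using b z by (intro divide_right_mono mult_left_mono power_le_one) auto
    also have "\<dots> \<le> real (m choose ?s) * N ^ (m - ?s) / fact m"
      using b by (intro divide_right_mono) auto
    finally show "norm (complex_of_real (DD \<Lambda> T m) * z ^ m / fact m) \<le> real (m choose ?s) * N ^ (m - ?s) / fact m" .
  next
    show "summable (\<lambda>m. real (m choose ?s) * N ^ (m - ?s) / fact m)" using g_sums by (rule sums_summable)
  qed
  then show ?thesis
    using sums_unique[OF exp_sum_series[OF fin(1), of \<Lambda> z]] sums_unique[OF g_sums[of ?s N]] by simp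
qed




lemma evalP_00: "evalP n c 0 0 = c 0 0"
proof -
  have "evalP n c 0 0 = (\<Sum>k\<in>{(i,j). i + j \<le> n}. if k = (0,0) then c 0 0 else 0)"
    unfolding evalP_def by (rule sum.cong) (auto simp: zero_power)
  also have "\<dots> = c 0 0" by (subst sum.delta) (auto simp: finite_II)
  finally show ?thesis .
qed

lemma E_lower:
  assumes irr: "\<alpha> \<notin> \<rat>" and a0: "0 < \<alpha>" and a1: "\<alpha> < 1" and n1: "n \<ge> 1"
    and TI: "T \<subseteq> {(i,j). i + j \<le> n}" and T0: "(0,0) \<in> T"
  shows "E_n n \<alpha> \<ge> fact (card T - 1) / (real n ^ (card T - 1) * exp (real n))"
proof -
  let ?I = "{(i,j). i + j \<le> n}"
  let ?s = "card T - 1"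
  define \<Lambda> where "\<Lambda> = lam \<alpha>"
  define w where "w k = 1 / (\<Prod>l\<in>T-{k}. (\<Lambda> k - \<Lambda> l))" for k
  define c0 where "c0 i j = (if (i,j) \<in> T then complex_of_real (w (i,j)) else 0)" for i j
  have finT: "finite T" using finite_subset[OF TI finite_II] .
  have injT: "inj_on \<Lambda> T" unfolding \<Lambda>_def using inj_lam[OF irr] by (rule inj_on_subset) simp
  have Lrange: "\<forall>k\<in>T. 0 \<le> \<Lambda> k \<and> \<Lambda> k \<le> real n"
  proof
    fix k assume "k \<in> T"
    then have "fst k + snd k \<le> n" using TI by auto
    moreover have "\<alpha> * real (snd k) \<le> real (snd k)" using a1 by (simp add: mult_left_le_one_le a0 less_imp_le)
    ultimately show "0 \<le> \<Lambda> k \<and> \<Lambda> k \<le> real n" unfolding \<Lambda>_def lam_def using a0 by auto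
  qed
  have Lpos: "\<Lambda> l > 0" if "l \<noteq> (0,0)" for l
  proof -
    obtain a b where l: "l = (a,b)" by (cases l)
    have "0 \<le> \<alpha> * real b" using a0 by simp
    moreover have "a > 0 \<or> b > 0" using that l by auto
    moreover have "b > 0 \<Longrightarrow> 0 < \<alpha> * real b" using a0 by simp
    ultimately show ?thesis unfolding \<Lambda>_def lam_def l by auto
  qed
  have evK: "evalP n c0 (exp z) (exp (complex_of_real \<alpha> * z))
       = (\<Sum>k\<in>T. complex_of_real (w k) * exp (complex_of_real (\<Lambda> k) * z))" for z
  proof -
    have "evalP n c0 (exp z) (exp (complex_of_real \<alpha> * z))
       = (\<Sum>k\<in>?I. c0 (fst k) (snd k) * exp (complex_of_real (\<Lambda> k) * z))"
      unfolding evalP_exp \<Lambda>_def ..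
    also have "\<dots> = (\<Sum>k\<in>T. c0 (fst k) (snd k) * exp (complex_of_real (\<Lambda> k) * z))"
      by (rule sum.mono_neutral_right[OF finite_II TI]) (auto simp: c0_def)
    also have "\<dots> = (\<Sum>k\<in>T. complex_of_real (w k) * exp (complex_of_real (\<Lambda> k) * z))"
      by (rule sum.cong) (auto simp: c0_def)
    finally show ?thesis .
  qed
  have Kb: "norm (evalP n c0 (fst p) (snd p)) \<le> exp (real n) / fact ?s" if pK: "p \<in> Kset \<alpha>" for p
  proof -
    obtain z where z0: "z \<in> cball 0 1" and zp: "p = (exp z, exp (complex_of_real \<alpha> * z))"
      using pK unfolding Kset_def by blast
    have zn: "norm z \<le> 1" using z0 by simp
    have Tne: "T \<noteq> {}" using T0 by blast
    from exp_sum_bound[OF finT Tne injT Lrange zn] show ?thesis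
      unfolding zp by (simp add: evK w_def)
  qed
  define S where "S = supK \<alpha> n c0"
  have S_le: "S \<le> exp (real n) / fact ?s"
    unfolding S_def supK_def using Kb Kset_mem[of 0 \<alpha>] by (intro cSUP_least) auto
  have S0: "S \<ge> 0" unfolding S_def by (rule supK_nonneg)
  have w00: "\<bar>w (0,0)\<bar> \<ge> 1 / real n ^ ?s"
  proof -
    have "(\<Prod>l\<in>T-{(0,0)}. \<bar>\<Lambda> (0,0) - \<Lambda> l\<bar>) = (\<Prod>l\<in>T-{(0,0)}. \<Lambda> l)"
    proof (rule prod.cong[OF refl])
      fix l assume "l \<in> T - {(0,0)}"
      then have "\<Lambda> l > 0" by (intro Lpos) auto
      moreover have "\<Lambda> (0,0) = 0" by (simp add: \<Lambda>_def lam_def)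
      ultimately show "\<bar>\<Lambda> (0,0) - \<Lambda> l\<bar> = \<Lambda> l" by simp
    qed
    moreover have pos: "(\<Prod>l\<in>T-{(0,0)}. \<Lambda> l) > 0" by (rule prod_pos) (auto intro: Lpos)
    moreover have "(\<Prod>l\<in>T-{(0,0)}. \<Lambda> l) \<le> real n ^ ?s"
      by (rule prod_le_power) (use Lrange n1 finT T0 in \<open>auto simp: card_Diff_singleton\<close>)
    moreover have "\<bar>w (0,0)\<bar> = 1 / (\<Prod>l\<in>T-{(0,0)}. \<bar>\<Lambda> (0,0) - \<Lambda> l\<bar>)"
      unfolding w_def by (simp add: abs_prod)
    ultimately have e: "\<bar>w (0,0)\<bar> = 1 / (\<Prod>l\<in>T-{(0,0)}. \<Lambda> l)" and "(\<Prod>l\<in>T-{(0,0)}. \<Lambda> l) \<le> real n ^ ?s"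
      by simp_all
    then show ?thesis using pos by (simp add: e frac_le)
  qed
  have w00pos: "\<bar>w (0,0)\<bar> > 0"
  proof -
    have "1 / real n ^ ?s > 0" using n1 by simp
    then show ?thesis using w00 by linarith
  qed
  obtain C where C0: "C \<ge> 0" and C: "\<And>c. supBidisk n c \<le> C * supK \<alpha> n c" using E_bound[OF irr, of n] by blast
  have B0: "supBidisk n c0 \<ge> \<bar>w (0,0)\<bar>"
    using supBidisk_ge[OF bidisk_ne, of n c0] by (simp add: evalP_00 c0_def T0)
  have Spos: "S > 0"
  proof (rule ccontr)
    assume "\<not> S > 0" then have "S = 0" using S0 by simp
    then show False using C[of c0] B0 w00pos unfolding S_def by simp
  qed
  define c1 where "c1 i j = c0 i j / complex_of_real S" for i j
  have ev1: "evalP n c1 z v = evalP n c0 z v / complex_of_real S" for z v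
    unfolding evalP_def c1_def sum_divide_distrib
  proof (rule sum.cong[OF refl])
    fix k :: "nat \<times> nat"
    obtain i j where k: "k = (i,j)" by (cases k)
    show "(case k of (i, j) \<Rightarrow> c0 i j / complex_of_real S * z ^ i * v ^ j) =
         (case k of (i, j) \<Rightarrow> c0 i j * z ^ i * v ^ j) / complex_of_real S"
      unfolding k by (simp only: prod.case times_divide_eq_left)
  qed
  have K1: "supK \<alpha> n c1 \<le> 1"
    unfolding supK_def
  proof (rule cSUP_least)
    have "(exp 0, exp (complex_of_real \<alpha> * 0)) \<in> Kset \<alpha>" by (rule Kset_mem) simp
    then show "Kset \<alpha> \<noteq> {}" by blast
    fix p assume "p \<in> Kset \<alpha>"
    then have "norm (evalP n c0 (fst p) (snd p)) \<le> S" unfolding S_def by (rule supK_ge)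
    moreover have "norm (evalP n c1 (fst p) (snd p)) = norm (evalP n c0 (fst p) (snd p)) / S"
      using Spos unfolding ev1 norm_divide by simp
    ultimately show "norm (evalP n c1 (fst p) (snd p)) \<le> 1" using Spos by (simp add: divide_le_eq_1)
  qed
  have B1: "supBidisk n c1 \<ge> \<bar>w (0,0)\<bar> / S"
  proof -
    have "norm (c1 0 0) = \<bar>w (0,0)\<bar> / S" using Spos by (simp add: c1_def c0_def T0 norm_divide)
    then show ?thesis using supBidisk_ge[OF bidisk_ne, of n c1] by (simp add: evalP_00)
  qed
  have "E_n n \<alpha> \<ge> supBidisk n c1"
    unfolding E_n_def
  proof (rule cSup_upper)
    show "supBidisk n c1 \<in> {supBidisk n c |c. supK \<alpha> n c \<le> 1}" using K1 by blast
    show "bdd_above {supBidisk n c |c. supK \<alpha> n c \<le> 1}"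
    proof (rule bdd_aboveI)
      fix x assume "x \<in> {supBidisk n c |c. supK \<alpha> n c \<le> 1}"
      then obtain c where "x = supBidisk n c" "supK \<alpha> n c \<le> 1" by blast
      moreover have "C * supK \<alpha> n c \<le> C * 1" using C0 \<open>supK \<alpha> n c \<le> 1\<close> by (intro mult_left_mono)
      ultimately show "x \<le> C" using C[of c] by simp
    qed
  qed
  moreover have "\<bar>w (0,0)\<bar> / S \<ge> (1 / real n ^ ?s) / (exp (real n) / fact ?s)"
    using w00 S_le Spos by (intro frac_le) auto
  moreover have "(1 / real n ^ ?s) / (exp (real n) / fact ?s) = fact ?s / (real n ^ ?s * exp (real n))"
    by simp
  ultimately show ?thesis using B1 by linarith
qed




lemma fact_lower: "real s ^ s / exp (real s) \<le> fact s"
proof -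
  have "(\<Sum>i\<in>{s}. real s ^ i / fact i) \<le> (\<Sum>i. real s ^ i / fact i)"
    using exp_converges[of "real s"]
    by (intro sum_le_suminf) (auto simp: sums_iff divide_inverse mult.commute)
  also have "(\<Sum>i. real s ^ i / fact i) = exp (real s)"
    using exp_converges[of "real s"] by (simp add: sums_iff divide_inverse mult.commute)
  finally have "real s ^ s / fact s \<le> exp (real s)" by simp
  then show ?thesis by (simp add: field_simps)
qed

lemma card_square: "card ({..m} \<times> {..m::nat}) = (m+1)^2"
  by (simp add: card_cartesian_product power2_eq_square)

lemma e_lower_m:
  assumes irr: "\<alpha> \<notin> \<rat>" and a0: "0 < \<alpha>" and a1: "\<alpha> < 1" and m6: "m \<ge> 6"
  shows "e_n (2*m) \<alpha> \<ge> real m ^ 2 * ln (real m / (2 * exp 1)) - 2 * real m"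
proof -
  define T where "T = {..m} \<times> {..m::nat}"
  define n where "n = 2 * m"
  define s where "s = card T - 1"
  have TI: "T \<subseteq> {(i,j). i + j \<le> n}" unfolding T_def n_def by auto
  have T0: "(0,0) \<in> T" unfolding T_def by auto
  have n1: "n \<ge> 1" unfolding n_def using m6 by simp
  have sv: "s = m^2 + 2*m" unfolding s_def T_def card_square by (simp add: power2_eq_square)
  have E: "E_n n \<alpha> \<ge> fact s / (real n ^ s * exp (real n))"
    unfolding s_def by (rule E_lower[OF irr a0 a1 n1 TI T0])
  define q where "q = real m / (2 * exp 1)"
  have q1: "q \<ge> 1" unfolding q_def using m6 exp_le by (simp add: field_simps)
  have "s \<ge> 1" using sv m6 by simp
  then have spos: "real s > 0" by simp
  have f1: "fact s / (real n ^ s * exp (real n)) \<ge> (real s ^ s / exp (real s)) / (real n ^ s * exp (real n))"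
    using fact_lower[of s] n1 by (intro divide_right_mono) auto
  have f2: "(real s ^ s / exp (real s)) / (real n ^ s * exp (real n)) = (real s / (exp 1 * real n)) ^ s / exp (real n)"
    by (simp add: power_divide power_mult_distrib exp_of_nat_mult[symmetric] field_simps)
  have f3: "(real s / (exp 1 * real n)) \<ge> q"
  proof -
    have "real s / (exp 1 * real n) = (real m + 2) / (2 * exp 1)"
      using m6 unfolding sv n_def by (simp add: field_simps power2_eq_square)
    then show ?thesis unfolding q_def by (simp add: divide_right_mono)
  qed
  have f4: "(real s / (exp 1 * real n)) ^ s / exp (real n) \<ge> q ^ s / exp (real n)"
    using q1 f3 by (intro divide_right_mono power_mono) auto
  have f5: "q ^ s \<ge> q ^ (m^2)" using q1 sv by (intro power_increasing) auto
  have f6: "q ^ s / exp (real n) \<ge> q ^ (m^2) / exp (real n)" using f5 by (intro divide_right_mono) auto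
  have Eb: "E_n n \<alpha> \<ge> q ^ (m^2) / exp (real n)"
    using E f1 f2 f4 f6 by linarith
  have qpos: "q ^ (m^2) / exp (real n) > 0" using q1 by simp
  have "ln (q ^ (m^2) / exp (real n)) \<le> ln (E_n n \<alpha>)"
    using Eb qpos by (subst ln_le_cancel_iff) auto
  moreover have "ln (q ^ (m^2) / exp (real n)) = real m ^ 2 * ln q - real n"
    using q1 by (simp add: ln_div ln_realpow)
  ultimately show ?thesis unfolding e_n_def n_def q_def by simp
qed




lemma pow2_summable: "summable (\<lambda>n::nat. if \<exists>k. n = 2 ^ k then 1 / real n else 0)"
proof (rule summableI_nonneg_bounded)
  let ?g = "\<lambda>n::nat. if \<exists>k. n = 2 ^ k then 1 / real n else 0"
  show "0 \<le> ?g n" for n by simp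
  fix N :: nat
  have sub: "(\<lambda>k::nat. (2::nat) ^ k) ` {k. 2 ^ k < N} \<subseteq> {..<N}" by auto
  have "(\<Sum>i<N. ?g i) = (\<Sum>i\<in>(\<lambda>k::nat. (2::nat) ^ k) ` {k. 2 ^ k < N}. ?g i)"
    by (rule sum.mono_neutral_right) (auto simp: sub)
  also have "\<dots> = (\<Sum>k\<in>{k. 2 ^ k < N}. ?g (2 ^ k))"
    by (subst sum.reindex) (auto simp: inj_on_def o_def)
  also have "\<dots> = (\<Sum>k\<in>{k. 2 ^ k < N}. (1/2::real) ^ k)"
    by (rule sum.cong) (auto simp: power_divide)
  also have "\<dots> \<le> (\<Sum>k. (1/2::real) ^ k)"
  proof (rule sum_le_suminf)
    show "summable (\<lambda>k. (1/2::real) ^ k)" by (rule summable_geometric) simp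
    have "{k::nat. 2 ^ k < N} \<subseteq> {..<N}"
      by (auto intro: less_trans[OF less_exp])
    then show "finite {k::nat. 2 ^ k < N}" by (rule finite_subset) simp
  qed simp
  also have "\<dots> = 2" using geometric_sums[of "1/2::real"] by (simp add: sums_iff)
  finally show "(\<Sum>i<N. ?g i) \<le> 2" .
qed

lemma part1: "summable (\<lambda>n. real n * eps_ex n)"
proof (rule summable_comparison_test')
  show "summable (\<lambda>n. inverse (real n ^ 2) + (if \<exists>k. n = 2 ^ k then 1 / real n else 0))"
    by (intro summable_add inverse_power_summable pow2_summable) simp
  fix n :: nat assume "n \<ge> 0"
  show "norm (real n * eps_ex n) \<le> inverse (real n ^ 2) + (if \<exists>k. n = 2 ^ k then 1 / real n else 0)"
  proof (cases "n = 0")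
    case True then show ?thesis by (simp add: eps_ex_def)
  next
    case False
    then have "real n \<ge> 1" by simp
    then show ?thesis unfolding eps_ex_def
      by (auto simp: power2_eq_square power3_eq_cube field_simps)
  qed
qed

lemma L_tendsto: "filterlim (\<lambda>k::nat. (real k * ln 2 - ln 2 - 1) / 4 - 1 / (2 * 2 ^ k)) at_top sequentially"
  by real_asymp

lemma part2:
  assumes irr: "\<alpha> \<notin> \<rat>" and a0: "0 < \<alpha>" and a1: "\<alpha> < 1"
  shows "limsup (\<lambda>n. ereal (eps_ex n * e_n n \<alpha>)) = \<infinity>"
proof -
  define X where "X n = ereal (eps_ex n * e_n n \<alpha>)" for n
  define r where "r k = (2::nat) ^ (k + 1)" for k
  have sm: "strict_mono r" unfolding r_def by (rule strict_monoI) simp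
  have bnd: "eps_ex (r k) * e_n (r k) \<alpha> \<ge> (real k * ln 2 - ln 2 - 1) / 4 - 1 / (2 * 2 ^ k)"
    if k3: "k \<ge> 3" for k
  proof -
    define m where "m = (2::nat) ^ k"
    have m8: "m \<ge> 8" unfolding m_def using power_increasing[OF k3, of "2::nat"] by simp
    have rk: "r k = 2 * m" unfolding r_def m_def by simp
    have eps: "eps_ex (2 * m) = 1 / (4 * real m ^ 2)"
      unfolding eps_ex_def by (auto simp: r_def m_def power2_eq_square) (metis power_Suc)
    have e: "e_n (2*m) \<alpha> \<ge> real m ^ 2 * ln (real m / (2 * exp 1)) - 2 * real m"
      using e_lower_m[OF irr a0 a1] m8 by simp
    have mpos: "real m > 0" using m8 by simp
    have lnq: "ln (real m / (2 * exp 1)) = real k * ln 2 - ln 2 - 1"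
      unfolding m_def using ln_div ln_mult by (simp add: ln_div ln_mult ln_realpow)
    have "eps_ex (r k) * e_n (r k) \<alpha> \<ge> (real m ^ 2 * ln (real m / (2 * exp 1)) - 2 * real m) / (4 * real m ^ 2)"
      unfolding rk eps using e mpos by (simp add: divide_right_mono)
    also have "(real m ^ 2 * ln (real m / (2 * exp 1)) - 2 * real m) / (4 * real m ^ 2)
        = ln (real m / (2 * exp 1)) / 4 - 1 / (2 * real m)"
      using mpos by (simp add: field_simps power2_eq_square)
    finally have fin: "eps_ex (r k) * e_n (r k) \<alpha> \<ge> ln (real m / (2 * exp 1)) / 4 - 1 / (2 * real m)" .
    have h2: "1 / (2 * real m) = 1 / (2 * 2 ^ k)" by (simp add: m_def)
    from fin show ?thesis unfolding lnq h2 .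
  qed
  have "((X \<circ> r) \<longlongrightarrow> \<infinity>) sequentially"
    unfolding tendsto_PInfty
  proof
    fix B :: real
    have "eventually (\<lambda>k. (real k * ln 2 - ln 2 - 1) / 4 - 1 / (2 * 2 ^ k) > B) sequentially"
      using L_tendsto by (simp add: filterlim_at_top_dense)
    moreover have "eventually (\<lambda>k::nat. k \<ge> 3) sequentially" by (rule eventually_ge_at_top)
    ultimately show "eventually (\<lambda>k. ereal B < (X \<circ> r) k) sequentially"
    proof eventually_elim
      case (elim k)
      then show ?case using bnd[of k] by (simp add: X_def)
    qed
  qed
  then have "limsup (X \<circ> r) = \<infinity>" by (intro lim_imp_Limsup) simp_all
  moreover have "limsup (X \<circ> r) \<le> limsup X" by (rule limsup_subseq_mono[OF sm])
  ultimately show ?thesis unfolding X_def by simp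
qed

theorem mainTheorem11:
  shows "summable (\<lambda>n. real n * eps_ex n) \<and> U_set eps_ex = {0<..<1} - \<rat>"
proof
  show "summable (\<lambda>n. real n * eps_ex n)" by (rule part1)
  show "U_set eps_ex = {0<..<1} - \<rat>"
    unfolding U_set_def using part2 by auto
qed


end
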